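(* For each $n\ge1$ let $f_n:\{1,\dots,n\}^2\to[0,\infty)$ be non-decreasing in each of its two arguments separately. Suppose that $\liminf_{n\to\infty}f_n(p_n,q_n)>0$ for every sequence $\{(p_n,q_n)\}$ with $(p_n,q_n)\in\{1,\dots,n\}^2$ satisfying either of the following: (i) $q_n\equiv1$ and $\lim_{n\to\infty}p_n/n$ exists and lies in $(0,1)$; (ii) $\lim_{n\to\infty}q_n=\infty$ and $\lim_{n\to\infty}p_nq_n^2/n$ exists and lies in $(0,\infty)$. Then $\liminf_{n\to\infty}f_n(p_n,q_n)>0$ for every sequence $\{(p_n,q_n)\}$ with $1\le p_n,q_n\le n$ such that $\lim_{n\to\infty}p_nq_n^2/n$ exists and lies in $(0,\infty)$. *)

theory Defs
  imports "HOL-Analysis.Analysis"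
begin

definition admissible_seq :: "(nat \<Rightarrow> nat) \<Rightarrow> (nat \<Rightarrow> nat) \<Rightarrow> bool" where
  "admissible_seq p q \<longleftrightarrow> (\<forall>n\<ge>1. 1 \<le> p n \<and> p n \<le> n \<and> 1 \<le> q n \<and> q n \<le> n)"

definition liminf_pos :: "(nat \<Rightarrow> nat \<Rightarrow> nat \<Rightarrow> real) \<Rightarrow> (nat \<Rightarrow> nat) \<Rightarrow> (nat \<Rightarrow> nat) \<Rightarrow> bool" where
  "liminf_pos f p q \<longleftrightarrow> liminf (\<lambda>n. ereal (f n (p n) (q n))) > 0"

end

theory Submission imports Defs "HOL-Real_Asymp.Real_Asymp" begin

lemma floor_ratio:
  fixes a :: real assumes a: "a > 0"
  shows "(\<lambda>n. real (nat \<lfloor>a * real n\<rfloor>) / real n) \<longlonglongrightarrow> a"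
proof (rule tendsto_sandwich[of "\<lambda>n. (a * real n - 1) / real n" _ _ "\<lambda>n. a"])
  show "\<forall>\<^sub>F n in sequentially. (a * real n - 1) / real n \<le> real (nat \<lfloor>a * real n\<rfloor>) / real n"
    using eventually_gt_at_top[of "0::nat"]
  proof eventually_elim
    case (elim n)
    have "a * real n - 1 \<le> real (nat \<lfloor>a * real n\<rfloor>)"
    proof -
      have "0 \<le> a * real n" using a by simp
      then have "real (nat \<lfloor>a * real n\<rfloor>) = real_of_int \<lfloor>a * real n\<rfloor>" by simp
      then show ?thesis by linarith
    qed
    then show ?case using elim by (simp add: divide_right_mono)
  qed
  show "\<forall>\<^sub>F n in sequentially. real (nat \<lfloor>a * real n\<rfloor>) / real n \<le> a"
    using eventually_gt_at_top[of "0::nat"]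
  proof eventually_elim
    case (elim n)
    have "real (nat \<lfloor>a * real n\<rfloor>) \<le> a * real n"
      using a by (simp add: of_nat_nat)
    then show ?case using elim by (simp add: divide_simps mult.commute)
  qed
  show "(\<lambda>n. (a * real n - 1) / real n) \<longlonglongrightarrow> a" by real_asymp
qed simp

lemma sqrt_filler:
  fixes L :: real assumes L: "L > 0"
  defines "s \<equiv> \<lambda>n::nat. min n (max 1 (nat \<lfloor>sqrt (L * real n)\<rfloor>))"
  shows "\<And>n. n \<ge> 1 \<Longrightarrow> 1 \<le> s n \<and> s n \<le> n"
    and "(\<lambda>n. real (s n) ^ 2 / real n) \<longlonglongrightarrow> L"
    and "filterlim s at_top sequentially"
proof -
  show "\<And>n. n \<ge> 1 \<Longrightarrow> 1 \<le> s n \<and> s n \<le> n" by (auto simp: s_def)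
  have ev: "\<forall>\<^sub>F n in sequentially. s n = nat \<lfloor>sqrt (L * real n)\<rfloor> \<and> sqrt (L * real n) \<ge> 1 \<and> n > 0"
  proof -
    have e1: "\<forall>\<^sub>F n in sequentially. sqrt (L * real n) \<ge> 1"
      using L by real_asymp
    have e2: "\<forall>\<^sub>F n in sequentially. sqrt (L * real n) \<le> real n"
      using L by real_asymp
    have "\<forall>\<^sub>F n in sequentially. sqrt (L * real n) \<ge> 1 \<and> sqrt (L * real n) \<le> real n"
      using e1 e2 by (rule eventually_conj)
    then show ?thesis
    proof eventually_elim
      case (elim n)
      then have n0: "n > 0" by (cases n) auto
      have "nat \<lfloor>sqrt (L * real n)\<rfloor> \<ge> 1" using elim by linarith
      moreover have "nat \<lfloor>sqrt (L * real n)\<rfloor> \<le> n" using elim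
        by (metis floor_mono floor_of_nat nat_le_iff)
      ultimately show ?case using elim n0 by (simp add: s_def)
    qed
  qed
  have lo: "\<forall>\<^sub>F n in sequentially. sqrt (L * real n) - 1 \<le> real (s n)"
    using ev
  proof eventually_elim
    case (elim n)
    have "0 \<le> \<lfloor>sqrt (L * real n)\<rfloor>" using elim by simp
    then have "real (s n) = real_of_int \<lfloor>sqrt (L * real n)\<rfloor>" using elim by simp
    then show ?case by linarith
  qed
  have up: "\<forall>\<^sub>F n in sequentially. real (s n) \<le> sqrt (L * real n)"
    using ev by eventually_elim (simp)
  show "(\<lambda>n. real (s n) ^ 2 / real n) \<longlonglongrightarrow> L"
  proof (rule tendsto_sandwich[of "\<lambda>n. (sqrt (L * real n) - 1)^2 / real n" _ _ "\<lambda>n. L"])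
    show "\<forall>\<^sub>F n in sequentially. (sqrt (L * real n) - 1) ^ 2 / real n \<le> real (s n) ^ 2 / real n"
      using ev lo
    proof eventually_elim
      case (elim n)
      have h1: "sqrt (L * real n) - 1 \<le> real (s n)" using elim(2) .
      have h2: "0 \<le> sqrt (L * real n) - 1" using elim(1) by auto
      have "(sqrt (L * real n) - 1) ^ 2 \<le> real (s n) ^ 2" by (rule power_mono[OF h1 h2])
      then show ?case by (rule divide_right_mono) simp
    qed
    show "\<forall>\<^sub>F n in sequentially. real (s n) ^ 2 / real n \<le> L"
      using ev up
    proof eventually_elim
      case (elim n)
      have h1: "real (s n) \<le> sqrt (L * real n)" using elim(2) .
      have h2: "0 \<le> real (s n)" by simp
      have n0: "0 < real n" using elim(1) by auto
      have "real (s n) ^ 2 \<le> (sqrt (L * real n)) ^ 2" by (rule power_mono[OF h1 h2])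
      also have "\<dots> = L * real n" using L by simp
      finally have "real (s n) ^ 2 \<le> L * real n" .
      then show ?case using n0 by (simp add: pos_divide_le_eq)
    qed
    have z0: "(\<lambda>n. sqrt (real n) / real n) \<longlonglongrightarrow> (0::real)" by real_asymp
    have "(\<lambda>n. sqrt L * (sqrt (real n) / real n)) \<longlonglongrightarrow> sqrt L * 0"
      by (intro tendsto_mult tendsto_const z0)
    then have z1: "(\<lambda>n. sqrt (L * real n) / real n) \<longlonglongrightarrow> 0"
      by (simp add: real_sqrt_mult)
    have z2: "(\<lambda>n. 1 / real n) \<longlonglongrightarrow> (0::real)" by real_asymp
    have "(\<lambda>n. L - 2 * (sqrt (L * real n) / real n) + 1 / real n) \<longlonglongrightarrow> L - 2 * 0 + 0"
      by (intro tendsto_add tendsto_diff tendsto_mult tendsto_const z1 z2)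
    then have lim0: "(\<lambda>n. L - 2 * (sqrt (L * real n) / real n) + 1 / real n) \<longlonglongrightarrow> L" by simp
    show "(\<lambda>n. (sqrt (L * real n) - 1) ^ 2 / real n) \<longlonglongrightarrow> L"
    proof (rule Lim_transform_eventually[OF lim0])
      show "\<forall>\<^sub>F n in sequentially. L - 2 * (sqrt (L * real n) / real n) + 1 / real n =
              (sqrt (L * real n) - 1) ^ 2 / real n"
        using eventually_gt_at_top[of "0::nat"]
      proof eventually_elim
        case (elim n)
        have sq: "(sqrt (L * real n)) ^ 2 = L * real n" using L by simp
        have "(sqrt (L * real n) - 1) ^ 2 = (sqrt (L * real n)) ^ 2 - 2 * sqrt (L * real n) + 1"
          by (simp add: power2_diff)
        also have "\<dots> = L * real n - 2 * sqrt (L * real n) + 1" using sq by simp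
        finally have "(sqrt (L * real n) - 1) ^ 2 / real n = (L * real n - 2 * sqrt (L * real n) + 1) / real n"
          by simp
        also have "\<dots> = L * real n / real n - 2 * sqrt (L * real n) / real n + 1 / real n"
          by (simp add: add_divide_distrib diff_divide_distrib)
        also have "\<dots> = L - 2 * (sqrt (L * real n) / real n) + 1 / real n"
          using elim by simp
        finally show ?case by simp
      qed
    qed
  qed simp
  have lim: "filterlim (\<lambda>n. sqrt (L * real n) - 1) at_top sequentially" using L by real_asymp
  show "filterlim s at_top sequentially"
    unfolding filterlim_at_top
  proof
    fix Z :: nat
    have "\<forall>\<^sub>F n in sequentially. real Z \<le> sqrt (L * real n) - 1"
      using lim by (simp add: filterlim_at_top)
    then show "\<forall>\<^sub>F n in sequentially. Z \<le> s n"
      using lo by eventually_elim simp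
  qed
qed

lemma tendsto_if_seq:
  fixes X Y :: "nat \<Rightarrow> real"
  assumes "X \<longlonglongrightarrow> L" "Y \<longlonglongrightarrow> L"
  shows "(\<lambda>n. if P n then X n else Y n) \<longlonglongrightarrow> L"
proof (rule tendstoI)
  fix e :: real assume "e > 0"
  then have "\<forall>\<^sub>F n in sequentially. dist (X n) L < e" "\<forall>\<^sub>F n in sequentially. dist (Y n) L < e"
    using assms tendstoD by blast+
  then show "\<forall>\<^sub>F n in sequentially. dist (if P n then X n else Y n) L < e"
    by eventually_elim auto
qed


theorem lemma3p6:
  fixes f :: "nat \<Rightarrow> nat \<Rightarrow> nat \<Rightarrow> real"
  assumes nonneg: "\<And>n p q. 1 \<le> n \<Longrightarrow> p \<in> {1..n} \<Longrightarrow> q \<in> {1..n} \<Longrightarrow> f n p q \<ge> 0"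
    and mono1: "\<And>n p p' q. 1 \<le> n \<Longrightarrow> p \<in> {1..n} \<Longrightarrow> p' \<in> {1..n} \<Longrightarrow> q \<in> {1..n} \<Longrightarrow>
                  p \<le> p' \<Longrightarrow> f n p q \<le> f n p' q"
    and mono2: "\<And>n p q q'. 1 \<le> n \<Longrightarrow> p \<in> {1..n} \<Longrightarrow> q \<in> {1..n} \<Longrightarrow> q' \<in> {1..n} \<Longrightarrow>
                  q \<le> q' \<Longrightarrow> f n p q \<le> f n p q'"
    and case_i: "\<And>p q. admissible_seq p q \<Longrightarrow> (\<forall>n\<ge>1. q n = 1) \<Longrightarrow>
                  (\<exists>L. (\<lambda>n. real (p n) / real n) \<longlonglongrightarrow> L \<and> 0 < L \<and> L < 1) \<Longrightarrow>
                  liminf_pos f p q"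
    and case_ii: "\<And>p q. admissible_seq p q \<Longrightarrow> filterlim q at_top sequentially \<Longrightarrow>
                  (\<exists>L. (\<lambda>n. real (p n) * real (q n) ^ 2 / real n) \<longlonglongrightarrow> L \<and> 0 < L) \<Longrightarrow>
                  liminf_pos f p q"
  shows "\<And>p q. admissible_seq p q \<Longrightarrow>
           (\<exists>L. (\<lambda>n. real (p n) * real (q n) ^ 2 / real n) \<longlonglongrightarrow> L \<and> 0 < L) \<Longrightarrow>
           liminf_pos f p q"
proof -
  fix p q :: "nat \<Rightarrow> nat"
  assume adm: "admissible_seq p q"
    and "\<exists>L. (\<lambda>n. real (p n) * real (q n) ^ 2 / real n) \<longlonglongrightarrow> L \<and> 0 < L"
  then obtain L where Llim: "(\<lambda>n. real (p n) * real (q n) ^ 2 / real n) \<longlonglongrightarrow> L" and L: "0 < L"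
    by blast
  have admD: "1 \<le> p n \<and> p n \<le> n \<and> 1 \<le> q n \<and> q n \<le> n" if "n \<ge> 1" for n
    using adm that unfolding admissible_seq_def by blast
  define F where "F n = f n (p n) (q n)" for n
  have posD: "\<exists>z>0. \<forall>\<^sub>F n in sequentially. z < f n (a n) (b n)" if "liminf_pos f a b" for a b
  proof -
    from that have "0 < liminf (\<lambda>n. ereal (f n (a n) (b n)))" unfolding liminf_pos_def by simp
    from ereal_dense2[OF this] obtain z where z: "0 < ereal z" "ereal z < liminf (\<lambda>n. ereal (f n (a n) (b n)))"
      by blast
    from less_LiminfD[OF z(2)] have "\<forall>\<^sub>F n in sequentially. z < f n (a n) (b n)" by simp
    with z(1) show ?thesis by auto
  qed
  have bnd: "\<exists>c>0. \<forall>\<^sub>F n in sequentially. q n \<le> Q \<longrightarrow> c \<le> F n" for Q :: nat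
  proof -
    define Q' where "Q' = max Q 1"
    have Q'1: "Q' \<ge> 1" by (simp add: Q'_def)
    define a where "a = min (L / (2 * real Q' ^ 2)) (1/2)"
    have a0: "a > 0" using L Q'1 by (simp add: a_def)
    have a1: "a < 1" "a \<le> 1/2" by (auto simp: a_def)
    have aQ: "a * (2 * real Q' ^ 2) \<le> L"
    proof -
      have "a \<le> L / (2 * real Q' ^ 2)" by (simp add: a_def)
      moreover have "0 < 2 * real Q' ^ 2" using Q'1 by simp
      ultimately show ?thesis by (simp add: pos_le_divide_eq)
    qed
    define A where "A n = max 1 (nat \<lfloor>a * real n\<rfloor>)" for n
    have admA: "admissible_seq A (\<lambda>_. 1)"
      unfolding admissible_seq_def
    proof (intro allI impI conjI)
      fix n :: nat assume "n \<ge> 1"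
      have "a * real n \<le> real n" using a0 a1 by (intro mult_left_le_one_le) auto
      then have "nat \<lfloor>a * real n\<rfloor> \<le> n" by (metis floor_mono floor_of_nat nat_le_iff)
      then show "A n \<le> n" using \<open>n \<ge> 1\<close> by (simp add: A_def)
    qed (auto simp: A_def)
    have "(\<lambda>n. real (A n) / real n) \<longlonglongrightarrow> a"
    proof (rule Lim_transform_eventually[OF floor_ratio[OF a0]])
      have "\<forall>\<^sub>F n in sequentially. 1 \<le> a * real n" using a0 by real_asymp
      then show "\<forall>\<^sub>F n in sequentially. real (nat \<lfloor>a * real n\<rfloor>) / real n = real (A n) / real n"
      proof eventually_elim
        case (elim n)
        then have "nat \<lfloor>a * real n\<rfloor> \<ge> 1" by linarith
        then show ?case by (simp add: A_def)
      qed
    qed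
    have "liminf_pos f A (\<lambda>_. 1)"
    proof (rule case_i[OF admA])
      show "\<exists>L. (\<lambda>n. real (A n) / real n) \<longlonglongrightarrow> L \<and> 0 < L \<and> L < 1"
        using \<open>(\<lambda>n. real (A n) / real n) \<longlonglongrightarrow> a\<close> a0 a1(1) by blast
    qed simp
    from posD[OF this] obtain z where z: "z > 0" "\<forall>\<^sub>F n in sequentially. z < f n (A n) 1" by blast
    have half: "\<forall>\<^sub>F n in sequentially. L / 2 < real (p n) * real (q n) ^ 2 / real n"
      using Llim L by (intro order_tendstoD(1)) auto
    have "\<forall>\<^sub>F n in sequentially. q n \<le> Q \<longrightarrow> z \<le> F n"
      using z(2) half eventually_ge_at_top[of "1::nat"]
    proof eventually_elim
      case (elim n)
      show ?case
      proof
        assume qQ: "q n \<le> Q"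
        have ad: "1 \<le> p n" "p n \<le> n" "1 \<le> q n" "q n \<le> n" using admD[OF elim(3)] by auto
        have n0: "real n > 0" using elim(3) by simp
        have "L * real n / 2 < real (p n) * real (q n) ^ 2"
          using elim(2) n0 by (simp add: field_simps)
        also have "\<dots> \<le> real (p n) * real Q' ^ 2"
          using qQ by (intro mult_left_mono power_mono) (auto simp: Q'_def)
        finally have "L * real n < 2 * real (p n) * real Q' ^ 2" by simp
        moreover have "a * real n * (2 * real Q' ^ 2) \<le> L * real n"
        proof -
          have "a * (2 * real Q' ^ 2) * real n \<le> L * real n"
            using aQ by (rule mult_right_mono) simp
          then show ?thesis by (simp add: mult_ac)
        qed
        ultimately have "a * real n * (2 * real Q' ^ 2) < real (p n) * (2 * real Q' ^ 2)"
          by (simp add: mult_ac)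
        then have "a * real n < real (p n)" using Q'1
          by (simp add: mult_less_cancel_right)
        then have "nat \<lfloor>a * real n\<rfloor> \<le> p n" by linarith
        then have Ap: "A n \<le> p n" using ad by (simp add: A_def)
        have A1: "1 \<le> A n" "A n \<le> n" using admA elim(3) unfolding admissible_seq_def by auto
        have "f n (A n) 1 \<le> f n (p n) 1"
          using mono1[of n "A n" "p n" 1] A1 ad Ap elim(3) by auto
        also have "\<dots> \<le> f n (p n) (q n)"
          using mono2[of n "p n" 1 "q n"] ad elim(3) by auto
        finally show "z \<le> F n" using elim(1) by (simp add: F_def)
      qed
    qed
    with z(1) show ?thesis by blast
  qed
  show "liminf_pos f p q"
  proof (rule ccontr)
    assume neg: "\<not> liminf_pos f p q"
    have freq: "\<exists>n\<ge>N. F n < e" if "e > 0" for e N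
    proof (rule ccontr)
      assume "\<not> (\<exists>n\<ge>N. F n < e)"
      then have "\<forall>\<^sub>F n in sequentially. ereal e \<le> ereal (F n)"
        unfolding eventually_sequentially by force
      then have "ereal e \<le> liminf (\<lambda>n. ereal (F n))" by (rule Liminf_bounded)
      moreover have "(0::ereal) < ereal e" using that by simp
      ultimately have "0 < liminf (\<lambda>n. ereal (F n))" by (meson less_le_trans)
      with neg show False unfolding liminf_pos_def F_def by simp
    qed
    have ex: "\<exists>n\<ge>N. F n < 1 / (real k + 1) \<and> k < q n" for k N
    proof -
      obtain c where c: "c > 0" "\<forall>\<^sub>F n in sequentially. q n \<le> k \<longrightarrow> c \<le> F n"
        using bnd[of k] by blast
      then obtain N1 where N1: "\<forall>n\<ge>N1. q n \<le> k \<longrightarrow> c \<le> F n"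
        unfolding eventually_sequentially by blast
      have "min c (1 / (real k + 1)) > 0" using c by simp
      from freq[OF this, of "max N N1"] obtain n where
        n: "n \<ge> max N N1" "F n < min c (1 / (real k + 1))" by blast
      have "k < q n"
      proof (rule ccontr)
        assume "\<not> k < q n"
        then have "q n \<le> k" by simp
        moreover have "n \<ge> N1" using n(1) by simp
        ultimately have "c \<le> F n" using N1 by blast
        moreover have "F n < c" using n(2) by simp
        ultimately show False by simp
      qed
      moreover have "F n < 1 / (real k + 1)" using n(2) by simp
      moreover have "n \<ge> N" using n(1) by simp
      ultimately show ?thesis by blast
    qed
    define r where "r k = (SOME n. n \<ge> k \<and> F n < 1 / (real k + 1) \<and> k < q n)" for k
    have r: "r k \<ge> k \<and> F (r k) < 1 / (real k + 1) \<and> k < q (r k)" for k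
      unfolding r_def by (rule someI_ex) (use ex[of k k] in blast)
    define s where "s = (\<lambda>n::nat. min n (max 1 (nat \<lfloor>sqrt (L * real n)\<rfloor>)))"
    have sf1: "1 \<le> s n \<and> s n \<le> n" if "n \<ge> 1" for n
      using sqrt_filler(1)[OF L that] unfolding s_def by simp
    have sf2: "(\<lambda>n. real (s n) ^ 2 / real n) \<longlonglongrightarrow> L"
      using sqrt_filler(2)[OF L] unfolding s_def by simp
    have sf3: "filterlim s at_top sequentially"
      using sqrt_filler(3)[OF L] unfolding s_def by simp
    define R where "R = range r"
    define Bp where "Bp n = (if n \<in> R then p n else 1)" for n
    define Bq where "Bq n = (if n \<in> R then q n else s n)" for n
    have admB: "admissible_seq Bp Bq"
      unfolding admissible_seq_def
    proof (intro allI impI)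
      fix n :: nat assume n1: "n \<ge> 1"
      show "1 \<le> Bp n \<and> Bp n \<le> n \<and> 1 \<le> Bq n \<and> Bq n \<le> n"
      proof (cases "n \<in> R")
        case True
        then show ?thesis using admD[OF n1] by (simp add: Bp_def Bq_def)
      next
        case False
        then show ?thesis using sf1[OF n1] n1 by (simp add: Bp_def Bq_def)
      qed
    qed
    have "(\<lambda>n. real (Bp n) * real (Bq n) ^ 2 / real n) =
          (\<lambda>n. if n \<in> R then real (p n) * real (q n) ^ 2 / real n else real (s n) ^ 2 / real n)"
      by (auto simp: Bp_def Bq_def)
    moreover have "\<dots> \<longlonglongrightarrow> L" by (rule tendsto_if_seq[OF Llim sf2])
    ultimately have limB: "(\<lambda>n. real (Bp n) * real (Bq n) ^ 2 / real n) \<longlonglongrightarrow> L" by simp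
    have infB: "filterlim Bq at_top sequentially"
      unfolding filterlim_at_top
    proof
      fix Z :: nat
      obtain N where N: "\<forall>m\<in>r ` {..<Z}. m < N"
        using finite_nat_bounded[of "r ` {..<Z}"] by auto
      have "\<forall>\<^sub>F n in sequentially. Z \<le> s n" using sf3 by (simp add: filterlim_at_top)
      then show "\<forall>\<^sub>F n in sequentially. Z \<le> Bq n"
        using eventually_ge_at_top[of N]
      proof eventually_elim
        case (elim n)
        show ?case
        proof (cases "n \<in> R")
          case True
          then obtain k where k: "n = r k" by (auto simp: R_def)
          have "k \<ge> Z"
          proof (rule ccontr)
            assume "\<not> Z \<le> k"
            then have "k \<in> {..<Z}" by simp
            then have "r k < N" using N by blast
            then show False using elim(2) k by simp
          qed
          then show ?thesis using r[of k] k True by (simp add: Bq_def)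
        next
          case False
          then show ?thesis using elim by (simp add: Bq_def)
        qed
      qed
    qed
    have "liminf_pos f Bp Bq" using case_ii[OF admB infB] limB L by blast
    from posD[OF this] obtain z where z: "z > 0" "\<forall>\<^sub>F n in sequentially. z < f n (Bp n) (Bq n)"
      by blast
    then obtain N where N: "\<forall>n\<ge>N. z < f n (Bp n) (Bq n)" unfolding eventually_sequentially by blast
    define k where "k = max N (nat \<lceil>1 / z\<rceil>)"
    have "real (nat \<lceil>1 / z\<rceil>) \<ge> 1 / z" by linarith
    moreover have "nat \<lceil>1 / z\<rceil> \<le> k" by (simp add: k_def)
    ultimately have "real k \<ge> 1 / z"
      by (meson of_nat_le_iff order_trans)
    then have "1 / (real k + 1) < z"
    proof -
      have "1 / z < real k + 1" using \<open>real k \<ge> 1 / z\<close> by linarith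
      then have "1 < (real k + 1) * z" using z(1) by (simp add: divide_less_eq)
      then show ?thesis by (simp add: divide_less_eq mult.commute)
    qed
    have rR: "r k \<in> R" by (simp add: R_def)
    have rN: "r k \<ge> N"
    proof -
      have "N \<le> k" by (simp add: k_def)
      then show ?thesis using r[of k] by simp
    qed
    have "z < F (r k)"
    proof -
      have "z < f (r k) (Bp (r k)) (Bq (r k))" using N rN by blast
      moreover have "Bp (r k) = p (r k)" "Bq (r k) = q (r k)" using rR by (simp_all add: Bp_def Bq_def)
      ultimately show ?thesis by (simp add: F_def)
    qed
    with r[of k] \<open>1 / (real k + 1) < z\<close> show False by linarith
  qed
qed

end
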